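(* Fix $s>0$. For each $\delta\in(0,\delta_0)$ and each $\rho\in(\delta/\delta_0,1)$ there exists a constant $c_3=c_3(\delta,\rho)>0$ such that for every integer $n\ge1$ and every partition $\lambda=1^{n_1}2^{n_2}\cdots$ of $n$, \[ \mathsf L_{[0,\delta n^{5/4}]}\le c_3\,\rho^{n+1}. \]
   Context: For integers $a,i\ge1$ let $f_{a,i}=\frac1{2i}\sum_{d\mid i,\ d\text{ odd}}\mu(d)(2a)^{i/d}$ ($\mu$ the Möbius function; sum over positive odd divisors of $i$), a positive integer, and define $g_{a,i}$ by $f_{a,i}=\frac{(2a)^i}{2i}g_{a,i}$. Let $c_1>0$ be a fixed constant such that $e^{-c_1(2a)^{-2i/3}}\le g_{a,i}\le e^{c_1(2a)^{-2i/3}}$ for all $a,i\ge1$ (e.g. $c_1=4$). Fix $s>0$; for each $n\ge1$ let $t=t_n\in(0,1)$ be the unique solution in $(0,1)$ of $\frac{4t}{(1+t)^2}=e^{-s/\sqrt n}$, i.e. $t=\frac{1-\sqrt{1-e^{-s/\sqrt n}}}{1+\sqrt{1-e^{-s/\sqrt n}}}$. Set $\delta_0=\left[\sup_{n\ge1}\left(n^{1/4}\log(1/t_n)\,e^{(c_1/4)+1}\right)\right]^{-1}$ (a positive number). Given a partition $\lambda$ of $n$ with $n_i$ parts of size $i$, for $a,i\ge1$ let \[ \mathsf K_{a,i}=\sum_{\nu=0}^{n_i}\frac1{2^{n_i}}\binom{n_i}{\nu}\frac{(f_{a,i}-\nu+n_i-1)!}{(f_{a,i}-\nu)!\,f_{a,i}^{\,n_i-1}},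 \] equivalently $\mathsf K_{a,i}=\frac{n_i!}{(2f_{a,i})^{n_i}}[x^{n_i}]\left(\frac{1+x}{1-x}\right)^{f_{a,i}}$ (here the ratio of factorials is the polynomial $\prod_{k=1}^{n_i-1}(f_{a,i}-\nu+k)$ when $n_i\ge1$, and $\mathsf K_{a,i}=1$ when $n_i=0$). For $A\subseteq\mathbb R$ define \[ \mathsf L_A=\frac{\log^{n+1}(1/t)}{n!}\sum_{a\in A\cap\{1,2,3,\dots\}}a^n t^a\prod_{1\le i\le n}g_{a,i}^{n_i}\mathsf K_{a,i}. \] *)

theory Defs
  imports "HOL-Analysis.Analysis" "HOL-Computational_Algebra.Squarefree"
begin

definition mu :: "nat \<Rightarrow> real" where
  "mu d = (if squarefree d then (-1) ^ card (prime_factors d) else 0)"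

text \<open>f_{a,i} (as a real number; it is a positive integer).\<close>
definition ff :: "nat \<Rightarrow> nat \<Rightarrow> real" where
  "ff a i = (1 / (2 * real i)) *
     (\<Sum>d\<in>{d. d dvd i \<and> odd d}. mu d * (2 * real a) ^ (i div d))"

definition gg :: "nat \<Rightarrow> nat \<Rightarrow> real" where
  "gg a i = ff a i * (2 * real i) / (2 * real a) ^ i"

definition tt :: "real \<Rightarrow> nat \<Rightarrow> real" where
  "tt s n = (1 - sqrt (1 - exp (- s / sqrt (real n)))) / (1 + sqrt (1 - exp (- s / sqrt (real n))))"

definition delta0 :: "real \<Rightarrow> real \<Rightarrow> real" where
  "delta0 s c1 = inverse (SUP n\<in>{1::nat..}. real n powr (1/4) * ln (1 / tt s n) * exp (c1 / 4 + 1))"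

text \<open>K_{a,i} for multiplicity k = n_i; the factorial ratio is the polynomial
  prod_{j=1}^{k-1} (f - nu + j), and K = 1 when k = 0.\<close>
definition KK :: "nat \<Rightarrow> nat \<Rightarrow> nat \<Rightarrow> real" where
  "KK a i k = (if k = 0 then 1 else
     (\<Sum>\<nu>=0..k. (1 / 2 ^ k) * real (k choose \<nu>) *
        (\<Prod>j=1..k-1. ff a i - real \<nu> + real j) / ff a i ^ (k - 1)))"

text \<open>L_A for a partition of n given by multiplicities m (m i = n_i).\<close>
definition LL :: "real \<Rightarrow> nat \<Rightarrow> (nat \<Rightarrow> nat) \<Rightarrow> real set \<Rightarrow> real" where
  "LL s n m A = (ln (1 / tt s n)) ^ (n + 1) / fact n *
     (\<Sum>a\<in>{a::nat. 1 \<le> a \<and> real a \<in> A}.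
        real a ^ n * tt s n ^ a * (\<Prod>i=1..n. gg a i ^ m i * KK a i (m i)))"

definition is_partition_mult :: "nat \<Rightarrow> (nat \<Rightarrow> nat) \<Rightarrow> bool" where
  "is_partition_mult n m \<longleftrightarrow> m 0 = 0 \<and> (\<forall>i>n. m i = 0) \<and> (\<Sum>i=1..n. i * m i) = n"

end

theory Submission
  imports Defs "HOL-Real_Asymp.Real_Asymp"
begin

lemma KK_abs_le:
  assumes F: "ff a i > 0"
  shows "\<bar>KK a i k\<bar> \<le> (1 + real k / ff a i) ^ k"
proof (cases "k = 0")
  case True then show ?thesis by (simp add: KK_def)
next
  case False
  define F where "F = ff a i"
  have Fp: "F > 0" using F F_def by simp
  have pb: "\<bar>\<Prod>j=1..k-1. F - real \<nu> + real j\<bar> \<le> (F + real k) ^ (k - 1)" if "\<nu> \<in> {0..k}" for \<nu>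
  proof -
    have "\<bar>\<Prod>j=1..k-1. F - real \<nu> + real j\<bar> = (\<Prod>j=1..k-1. \<bar>F - real \<nu> + real j\<bar>)"
      by (simp add: abs_prod)
    also have "\<dots> \<le> (\<Prod>j=1..k-1. F + real k)"
    proof (rule prod_mono)
      fix j assume j: "j \<in> {1..k-1}"
      have "real \<nu> \<le> real k" using that by simp
      moreover have "real j \<le> real k" using j by auto
      moreover have "1 \<le> real j" using j by simp
      ultimately show "0 \<le> \<bar>F - real \<nu> + real j\<bar> \<and> \<bar>F - real \<nu> + real j\<bar> \<le> F + real k"
        using Fp by (simp add: abs_le_iff)
    qed
    also have "\<dots> = (F + real k) ^ (k - 1)" by simp
    finally show ?thesis .
  qed
  have "\<bar>KK a i k\<bar> = \<bar>\<Sum>\<nu>=0..k. (1 / 2 ^ k) * real (k choose \<nu>) *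
        (\<Prod>j=1..k-1. F - real \<nu> + real j) / F ^ (k - 1)\<bar>"
    using False by (simp add: KK_def F_def)
  also have "\<dots> \<le> (\<Sum>\<nu>=0..k. \<bar>(1 / 2 ^ k) * real (k choose \<nu>) *
        (\<Prod>j=1..k-1. F - real \<nu> + real j) / F ^ (k - 1)\<bar>)"
    by (rule sum_abs)
  also have "\<dots> \<le> (\<Sum>\<nu>=0..k. (1 / 2 ^ k) * real (k choose \<nu>) * (F + real k) ^ (k - 1) / F ^ (k - 1))"
  proof (rule sum_mono)
    fix \<nu> assume v: "\<nu> \<in> {0..k}"
    have "\<bar>(1 / 2 ^ k) * real (k choose \<nu>) *
        (\<Prod>j=1..k-1. F - real \<nu> + real j) / F ^ (k - 1)\<bar>
        = (1 / 2 ^ k) * real (k choose \<nu>) * \<bar>\<Prod>j=1..k-1. F - real \<nu> + real j\<bar> / F ^ (k - 1)"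
      using Fp by (simp add: abs_mult abs_divide)
    also have "\<dots> \<le> (1 / 2 ^ k) * real (k choose \<nu>) * (F + real k) ^ (k - 1) / F ^ (k - 1)"
      using Fp pb[OF v] by (intro divide_right_mono mult_left_mono) auto
    finally show "\<bar>(1 / 2 ^ k) * real (k choose \<nu>) *
        (\<Prod>j=1..k-1. F - real \<nu> + real j) / F ^ (k - 1)\<bar> \<le> (1 / 2 ^ k) * real (k choose \<nu>) * (F + real k) ^ (k - 1) / F ^ (k - 1)" .
  qed
  also have "\<dots> = (\<Sum>\<nu>=0..k. real (k choose \<nu>)) * ((F + real k) ^ (k - 1) / F ^ (k - 1)) / 2 ^ k"
    by (simp add: sum_distrib_right sum_divide_distrib mult.commute)
  also have "(\<Sum>\<nu>=0..k. real (k choose \<nu>)) = 2 ^ k"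
  proof -
    have "(\<Sum>\<nu>=0..k. real (k choose \<nu>)) = real (\<Sum>\<nu>\<le>k. (k choose \<nu>))"
      by (simp add: atLeast0AtMost)
    also have "\<dots> = 2 ^ k" by (simp add: choose_row_sum)
    finally show ?thesis .
  qed
  also have "2 ^ k * ((F + real k) ^ (k - 1) / F ^ (k - 1)) / 2 ^ k = (1 + real k / F) ^ (k - 1)"
  proof -
    have "(F + real k) / F = 1 + real k / F" using Fp by (simp add: field_simps)
    then show ?thesis by (simp add: power_divide[symmetric])
  qed
  also have "\<dots> \<le> (1 + real k / F) ^ k"
    using Fp by (intro power_increasing) auto
  finally show ?thesis by (simp add: F_def)
qed

lemma two_i_le: "2 * i \<le> (2::nat) ^ i" if "i \<ge> 1" for i :: nat
  using that
proof (induction i rule: dec_induct)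
  case base then show ?case by simp
next
  case (step n) then show ?case by simp
qed

lemma pow_add_le: fixes B x :: real assumes "B \<ge> 0" "x \<ge> 0" "i \<ge> 1"
  shows "B ^ i + x ^ i \<le> (B + x) ^ i"
  using assms(3)
proof (induction i rule: dec_induct)
  case base then show ?case by simp
next
  case (step n)
  have "B ^ Suc n + x ^ Suc n \<le> B * (B + x) ^ n + x * (B + x) ^ n"
  proof (rule add_mono)
    show "B ^ Suc n \<le> B * (B + x) ^ n" using assms by (simp add: mult_left_mono power_mono)
    show "x ^ Suc n \<le> x * (B + x) ^ n" using assms by (simp add: mult_left_mono power_mono)
  qed
  also have "\<dots> = (B + x) ^ Suc n" by (simp add: algebra_simps)
  finally show ?case .
qed

lemma factor_bound:
  assumes a: "a \<ge> 1" and i: "i \<ge> 1" and g: "gg a i > 0"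
    and gB: "real a ^ i * gg a i \<le> B ^ i" and B: "B \<ge> 0"
  shows "real a ^ (i * k) * \<bar>gg a i ^ k * KK a i k\<bar> \<le> (B + real k) ^ (i * k)"
proof -
  define g where "g = gg a i"
  define f where "f = ff a i"
  have apos: "(2 * real a) ^ i > 0" using a by simp
  have fdef: "f = g * (2 * real a) ^ i / (2 * real i)"
    using apos i a by (simp add: g_def f_def gg_def)
  have fp: "f > 0" using fdef g apos i by (simp add: g_def)
  have ratio: "real a ^ i * g / f = 2 * real i / 2 ^ i"
  proof -
    have "real a ^ i * g * 2 ^ i = f * (2 * real i)"
      using fdef apos i by (simp add: field_simps power_mult_distrib)
    then show ?thesis using fp by (simp add: divide_simps)
  qed
  have "2 * real i / 2 ^ i \<le> 1"
  proof -
    have "real (2 * i) \<le> real (2 ^ i)" using two_i_le[OF i] by (simp only: of_nat_le_iff)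
    then show ?thesis by simp
  qed
  then have r1: "real a ^ i * g / f \<le> 1" using ratio by simp
  have "real a ^ (i * k) * \<bar>gg a i ^ k * KK a i k\<bar> = (real a ^ i) ^ k * g ^ k * \<bar>KK a i k\<bar>"
    using g by (simp add: g_def abs_mult power_mult)
  also have "\<dots> \<le> (real a ^ i) ^ k * g ^ k * (1 + real k / f) ^ k"
    using KK_abs_le[of a i k] fp g by (intro mult_left_mono) (auto simp: f_def g_def)
  also have "\<dots> = (real a ^ i * g * (1 + real k / f)) ^ k"
    by (simp only: power_mult_distrib)
  also have "\<dots> = (real a ^ i * g + real k * (real a ^ i * g / f)) ^ k"
    by (rule arg_cong[where f="\<lambda>x. x ^ k"]) (simp add: ring_distribs)
  also have "\<dots> \<le> (B ^ i + real k) ^ k"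
  proof (rule power_mono)
    have "real k * (real a ^ i * g / f) \<le> real k * 1"
      using r1 by (intro mult_left_mono) auto
    then show "real a ^ i * g + real k * (real a ^ i * g / f) \<le> B ^ i + real k"
      using gB by (simp add: g_def)
    show "0 \<le> real a ^ i * g + real k * (real a ^ i * g / f)"
      using g fp by (simp add: g_def)
  qed
  also have "\<dots> \<le> ((B + real k) ^ i) ^ k"
  proof (rule power_mono)
    have kk: "real k \<le> real k ^ i"
    proof (cases "k = 0")
      case True then show ?thesis using i by simp
    next
      case False
      then have "real k ^ 1 \<le> real k ^ i" using i by (intro power_increasing) auto
      then show ?thesis by simp
    qed
    then show "B ^ i + real k \<le> (B + real k) ^ i"
      using pow_add_le[OF B, of "real k" i] i kk by linarith
    show "0 \<le> B ^ i + real k" using B by simp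
  qed
  also have "\<dots> = (B + real k) ^ (i * k)" by (simp add: power_mult)
  finally show ?thesis .
qed

lemma tt_props:
  assumes s: "s > 0" and n: "n \<ge> 1"
  shows "0 < tt s n" "tt s n < 1"
    "real n powr (1/4) * ln (1 / tt s n) \<le> 2 * sqrt s / (1 - sqrt (1 - exp (- s)))"
proof -
  define x where "x = s / sqrt (real n)"
  define u where "u = sqrt (1 - exp (- x))"
  define us where "us = sqrt (1 - exp (- s))"
  have sn: "sqrt (real n) \<ge> 1" using n by simp
  have xp: "x > 0" using s sn by (simp add: x_def)
  have xs: "x \<le> s" using s sn by (simp add: x_def divide_le_eq)
  have tdef: "tt s n = (1 - u) / (1 + u)" by (simp add: tt_def u_def x_def)
  have up: "u > 0" using xp by (simp add: u_def)
  have u1: "u < 1" by (simp add: u_def)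
  have uus: "u \<le> us" using xs by (simp add: u_def us_def)
  have us1: "us < 1" by (simp add: us_def)
  have ux: "u \<le> sqrt x"
  proof -
    have "1 + (- x) \<le> exp (- x)" by (rule exp_ge_add_one_self)
    then show ?thesis by (simp add: u_def)
  qed
  show t0: "0 < tt s n" using up u1 by (simp add: tdef)
  show "tt s n < 1" using up u1 by (simp add: tdef)
  have inv: "1 / tt s n = 1 + 2 * u / (1 - u)"
    using up u1 by (simp add: tdef field_simps)
  have "ln (1 / tt s n) \<le> 1 / tt s n - 1"
    using t0 by (intro ln_le_minus_one) simp
  also have "\<dots> = 2 * u / (1 - u)" using inv by simp
  also have "\<dots> \<le> 2 * u / (1 - us)"
    using up uus us1 by (intro divide_left_mono) auto
  also have "\<dots> \<le> 2 * sqrt x / (1 - us)"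
    using ux us1 by (intro divide_right_mono) auto
  finally have L: "ln (1 / tt s n) \<le> 2 * sqrt x / (1 - us)" .
  have q: "real n powr (1/4) = sqrt (sqrt (real n))"
  proof -
    have "sqrt (sqrt (real n)) = (real n powr (1/2)) powr (1/2)"
      by (simp add: powr_half_sqrt)
    also have "\<dots> = real n powr (1/4)" by (simp add: powr_powr)
    finally show ?thesis by simp
  qed
  have q2: "real n powr (1/4) * sqrt x = sqrt s"
    using n by (simp add: q x_def real_sqrt_divide)
  have "real n powr (1/4) * ln (1 / tt s n) \<le> real n powr (1/4) * (2 * sqrt x / (1 - us))"
    using L by (intro mult_left_mono) auto
  also have "\<dots> = 2 * (real n powr (1/4) * sqrt x) / (1 - us)" by simp
  also have "\<dots> = 2 * sqrt s / (1 - us)" using q2 by simp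
  finally show "real n powr (1/4) * ln (1 / tt s n) \<le> 2 * sqrt s / (1 - sqrt (1 - exp (- s)))"
    by (simp add: us_def)
qed

lemma pow_div_fact_le_exp:
  fixes x :: real assumes "x \<ge> 0"
  shows "x ^ n / fact n \<le> exp x"
proof -
  have sm: "(\<lambda>k. x ^ k /\<^sub>R fact k) sums exp x" by (rule exp_converges)
  have "sum (\<lambda>k. x ^ k /\<^sub>R fact k) {n} \<le> suminf (\<lambda>k. x ^ k /\<^sub>R fact k)"
    using assms by (intro sum_le_suminf[OF sums_summable[OF sm]]) auto
  then show ?thesis using sums_unique[OF sm] by (simp add: divide_inverse mult.commute)
qed

lemma n2_geom_lim:
  fixes q :: real assumes "0 \<le> q" "q < 1"
  shows "(\<lambda>n. real n ^ 2 * q ^ n) \<longlonglongrightarrow> 0"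
proof -
  define w where "w = sqrt q"
  have w: "norm w < 1" using assms by (simp add: w_def)
  have l: "(\<lambda>n. of_nat n * w ^ n) \<longlonglongrightarrow> 0" by (rule powser_times_n_limit_0[OF w])
  have "(\<lambda>n. (of_nat n * w ^ n) * (of_nat n * w ^ n)) \<longlonglongrightarrow> 0 * 0"
    by (intro tendsto_mult l)
  moreover have "(of_nat n * w ^ n) * (of_nat n * w ^ n) = real n ^ 2 * q ^ n" for n
    using assms by (simp add: w_def power2_eq_square power_mult_distrib[symmetric])
  ultimately show ?thesis by simp
qed

lemma main_bound:
  fixes s c1 \<delta> D M A0 :: real and n :: nat and m :: "nat \<Rightarrow> nat"
  assumes s: "s > 0" and c1: "c1 > 0"
    and hyp: "\<forall>a i. 1 \<le> a \<longrightarrow> 1 \<le> i \<longrightarrow>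
           exp (- c1 * (2 * real a) powr (- 2 * real i / 3)) \<le> gg a i \<and>
           gg a i \<le> exp (c1 * (2 * real a) powr (- 2 * real i / 3))"
    and n: "n \<ge> 1" and part: "is_partition_mult n m"
    and D: "D > 0" and lt: "ln (1 / tt s n) \<le> D / real n powr (1/4)"
    and M: "M > 0" and A0: "\<forall>x::real. x \<ge> A0 \<longrightarrow> c1 * (2 * x) powr (-2/3) \<le> ln M"
    and \<delta>: "\<delta> > 0"
  shows "LL s n m {0 .. \<delta> * real n powr (5/4)} \<le> (D / real n powr (1/4)) * (\<delta> * real n powr (5/4)) *
      (D * exp 1 * (\<bar>A0\<bar> * exp c1 + \<delta> * real n powr (5/4) * M + real n) / (real n powr (1/4) * real n)) ^ n"
proof -
  define N where "N = \<delta> * real n powr (5/4)"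
  define B where "B = \<bar>A0\<bar> * exp c1 + N * M"
  define t where "t = tt s n"
  define S where "S = {a::nat. 1 \<le> a \<and> real a \<in> {0..N}}"
  define P where "P = (\<lambda>a. \<Prod>i=1..n. gg a i ^ m i * KK a i (m i))"
  have N0: "N \<ge> 0" using \<delta> by (simp add: N_def)
  have B0: "B \<ge> 0" using N0 M by (simp add: B_def)
  have t0: "0 < t" "t < 1" using tt_props[OF s n] by (simp_all add: t_def)
  have psum: "(\<Sum>i=1..n. i * m i) = n" using part by (simp add: is_partition_mult_def)
  have mle: "m i \<le> n" if "i \<in> {1..n}" for i
  proof -
    have "i * m i \<le> (\<Sum>i=1..n. i * m i)" by (rule member_le_sum) (use that in auto)
    moreover have "m i \<le> i * m i" using that by simp
    ultimately show ?thesis using psum by linarith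
  qed
  have term_bound: "real a ^ n * t ^ a * P a \<le> (B + real n) ^ n" if a: "a \<in> S" for a
  proof -
    have a1: "a \<ge> 1" and aN: "real a \<le> N" using a by (auto simp: S_def)
    define E where "E = exp (c1 * (2 * real a) powr (-2/3))"
    have aE: "real a * E \<le> B"
    proof (cases "real a \<ge> A0")
      case True
      then have "E \<le> M" using A0 M by (simp add: E_def ln_ge_iff)
      then have "real a * E \<le> N * M" using aN M by (intro mult_mono) (auto simp: E_def)
      then show ?thesis using B_def by (simp add: B_def) (smt (verit) abs_ge_zero exp_ge_zero mult_nonneg_nonneg)
    next
      case False
      have "(2 * real a) powr (-2/3) \<le> (2 * real a) powr 0" using a1 by (intro powr_mono) auto
      then have "(2 * real a) powr (-2/3) \<le> 1" using a1 by simp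
      then have "E \<le> exp c1" using c1 by (simp add: E_def mult_left_le)
      then have "real a * E \<le> \<bar>A0\<bar> * exp c1" using False
        by (intro mult_mono) (auto simp: E_def)
      moreover have "N * M \<ge> 0" using N0 M by simp
      ultimately show ?thesis by (simp add: B_def)
    qed
    have gB: "real a ^ i * gg a i \<le> B ^ i" and gpos: "gg a i > 0" if i: "i \<ge> 1" for i
    proof -
      have h: "exp (- c1 * (2 * real a) powr (- 2 * real i / 3)) \<le> gg a i \<and>
           gg a i \<le> exp (c1 * (2 * real a) powr (- 2 * real i / 3))" using hyp a1 i by auto
      then show "gg a i > 0" by (meson exp_gt_zero less_le_trans)
      have "(2 * real a) powr (- 2 * real i / 3) \<le> (2 * real a) powr (-2/3)"
        using a1 i by (intro powr_mono) auto
      also have "\<dots> \<le> real i * (2 * real a) powr (-2/3)"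
      proof -
        have "1 \<le> real i" using i by simp
        then have "1 * (2 * real a) powr (-2/3) \<le> real i * (2 * real a) powr (-2/3)"
          by (rule mult_right_mono) simp
        then show ?thesis by simp
      qed
      finally have "c1 * (2 * real a) powr (- 2 * real i / 3) \<le> real i * (c1 * (2 * real a) powr (-2/3))"
        using c1 by (simp add: mult_left_mono mult.left_commute)
      then have "exp (c1 * (2 * real a) powr (- 2 * real i / 3)) \<le> exp (real i * (c1 * (2 * real a) powr (-2/3)))"
        by simp
      then have "gg a i \<le> exp (real i * (c1 * (2 * real a) powr (-2/3)))" using h by linarith
      then have "gg a i \<le> E ^ i" by (simp add: E_def exp_of_nat_mult)
      then have "real a ^ i * gg a i \<le> real a ^ i * E ^ i" by (intro mult_left_mono) auto
      also have "\<dots> = (real a * E) ^ i" by (simp add: power_mult_distrib)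
      also have "\<dots> \<le> B ^ i" using aE by (intro power_mono) (auto simp: E_def)
      finally show "real a ^ i * gg a i \<le> B ^ i" .
    qed
    have "real a ^ n * t ^ a * P a \<le> \<bar>real a ^ n * t ^ a * P a\<bar>" by simp
    also have "\<dots> = real a ^ n * t ^ a * \<bar>P a\<bar>" using t0 by (simp add: abs_mult)
    also have "\<dots> \<le> real a ^ n * \<bar>P a\<bar>"
      using t0 by (intro mult_right_mono) (auto simp: power_le_one mult_left_le)
    also have "real a ^ n * \<bar>P a\<bar> = (\<Prod>i=1..n. real a ^ (i * m i) * \<bar>gg a i ^ m i * KK a i (m i)\<bar>)"
    proof -
      have "real a ^ n = (\<Prod>i=1..n. real a ^ (i * m i))"
        using psum by (metis power_sum)
      moreover have "\<bar>P a\<bar> = (\<Prod>i=1..n. \<bar>gg a i ^ m i * KK a i (m i)\<bar>)"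
        by (simp add: P_def abs_prod)
      ultimately show ?thesis by (simp add: prod.distrib)
    qed
    also have "\<dots> \<le> (\<Prod>i=1..n. (B + real (m i)) ^ (i * m i))"
      using a1 by (intro prod_mono conjI factor_bound gB gpos B0) auto
    also have "\<dots> \<le> (\<Prod>i=1..n. (B + real n) ^ (i * m i))"
      using mle B0 by (intro prod_mono conjI power_mono) auto
    also have "\<dots> = (B + real n) ^ n"
      using psum by (metis power_sum)
    finally show ?thesis .
  qed
  have Ssub: "S \<subseteq> {1..nat \<lfloor>N\<rfloor>}"
    by (auto simp: S_def le_nat_floor)
  have finS: "finite S" using Ssub finite_subset by blast
  have cardS: "real (card S) \<le> N"
  proof -
    have "card S \<le> card {1..nat \<lfloor>N\<rfloor>}" using Ssub by (intro card_mono) auto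
    then have "real (card S) \<le> real (nat \<lfloor>N\<rfloor>)" by simp
    also have "\<dots> \<le> N" using N0 by linarith
    finally show ?thesis .
  qed
  have sumb: "(\<Sum>a\<in>S. real a ^ n * t ^ a * P a) \<le> N * (B + real n) ^ n"
  proof -
    have "(\<Sum>a\<in>S. real a ^ n * t ^ a * P a) \<le> of_nat (card S) * (B + real n) ^ n"
      using term_bound by (intro sum_bounded_above) auto
    also have "\<dots> \<le> N * (B + real n) ^ n" using cardS B0 by (intro mult_right_mono) auto
    finally show ?thesis .
  qed
  define p where "p = real n powr (1/4)"
  have p1: "p \<ge> 1" using n by (simp add: p_def ge_one_powr_ge_zero)
  have ltpos: "ln (1 / t) > 0" using t0 by simp
  have LLeq: "LL s n m {0 .. \<delta> * real n powr (5/4)} = ln (1 / t) ^ (n + 1) / fact n * (\<Sum>a\<in>S. real a ^ n * t ^ a * P a)"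
    by (simp add: LL_def S_def N_def t_def P_def)
  have fb: "1 / fact n \<le> exp 1 ^ n / real n ^ n"
  proof -
    have "real n ^ n / fact n \<le> exp (real n)" by (rule pow_div_fact_le_exp) simp
    then have "real n ^ n \<le> exp (real n) * fact n" by (simp add: divide_le_eq)
    then show ?thesis using n by (simp add: field_simps exp_of_nat_mult[symmetric])
  qed
  have "LL s n m {0 .. \<delta> * real n powr (5/4)} \<le> ln (1 / t) ^ (n + 1) / fact n * (N * (B + real n) ^ n)"
    unfolding LLeq using ltpos by (intro mult_left_mono sumb) auto
  also have "\<dots> = ln (1 / t) ^ (n + 1) * (1 / fact n) * (N * (B + real n) ^ n)" by simp
  also have "\<dots> \<le> (D / p) ^ (n + 1) * (exp 1 ^ n / real n ^ n) * (N * (B + real n) ^ n)"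
    using ltpos lt fb N0 B0 D by (intro mult_right_mono mult_mono power_mono) (auto simp: t_def p_def)
  also have "\<dots> = (D / p) * N * ((D / p) ^ n * exp 1 ^ n * (B + real n) ^ n * (1 / real n) ^ n)"
    by (simp add: power_one_over[symmetric] divide_inverse mult_ac power_inverse)
  also have "(D / p) ^ n * exp 1 ^ n * (B + real n) ^ n * (1 / real n) ^ n = ((D / p) * exp 1 * (B + real n) * (1 / real n)) ^ n"
    by (simp only: power_mult_distrib)
  also have "(D / p) * exp 1 * (B + real n) * (1 / real n) = D * exp 1 * (B + real n) / (p * real n)"
    by simp
  finally show ?thesis by (simp add: N_def B_def p_def)
qed

theorem lemma3p2:
  fixes s c1 \<delta> \<rho> :: real
  assumes "s > 0" and "c1 > 0"
    and "\<forall>a i. 1 \<le> a \<longrightarrow> 1 \<le> i \<longrightarrow>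
           exp (- c1 * (2 * real a) powr (- 2 * real i / 3)) \<le> gg a i \<and>
           gg a i \<le> exp (c1 * (2 * real a) powr (- 2 * real i / 3))"
    and "0 < \<delta>" and "\<delta> < delta0 s c1"
    and "\<delta> / delta0 s c1 < \<rho>" and "\<rho> < 1"
  shows "\<exists>c3 > 0. \<forall>n \<ge> 1. \<forall>m. is_partition_mult n m \<longrightarrow>
           LL s n m {0 .. \<delta> * real n powr (5/4)} \<le> c3 * \<rho> ^ (n + 1)"
proof -
  note s = assms(1) and c1 = assms(2) and hyp = assms(3) and \<delta> = assms(4)
  define Ec where "Ec = exp (c1 / 4 + 1)"
  define D0 where "D0 = (SUP n\<in>{1::nat..}. real n powr (1/4) * ln (1 / tt s n) * Ec)"
  have d0: "delta0 s c1 = inverse D0" by (simp add: delta0_def D0_def Ec_def)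
  have D0pos: "D0 > 0" using assms(4,5) d0 by (metis inverse_positive_iff_positive order_less_trans)
  have bdd: "bdd_above ((\<lambda>n. real n powr (1/4) * ln (1 / tt s n) * Ec) ` {1::nat..})"
  proof (rule bdd_aboveI2)
    fix n :: nat assume "n \<in> {1..}"
    then have "real n powr (1/4) * ln (1 / tt s n) \<le> 2 * sqrt s / (1 - sqrt (1 - exp (- s)))"
      using tt_props(3)[OF s] by simp
    then show "real n powr (1/4) * ln (1 / tt s n) * Ec \<le> 2 * sqrt s / (1 - sqrt (1 - exp (- s))) * Ec"
      by (intro mult_right_mono) (auto simp: Ec_def)
  qed
  define D where "D = D0 / Ec"
  have Ecpos: "Ec > 0" by (simp add: Ec_def)
  have Dpos: "D > 0" using D0pos Ecpos by (simp add: D_def)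
  have lt: "ln (1 / tt s n) \<le> D / real n powr (1/4)" if n: "n \<ge> 1" for n :: nat
  proof -
    have "real n powr (1/4) * ln (1 / tt s n) * Ec \<le> D0"
      unfolding D0_def using n by (intro cSUP_upper bdd) auto
    moreover have "real n powr (1/4) > 0" using n by simp
    ultimately show ?thesis using Ecpos by (simp add: D_def field_simps)
  qed
  have DE: "D * exp 1 \<le> D0"
  proof -
    have "D * exp 1 = D0 / exp (c1 / 4)" by (simp add: D_def Ec_def exp_add)
    also have "\<dots> \<le> D0" using D0pos c1 by (simp add: divide_le_eq)
    finally show ?thesis .
  qed
  define r where "r = \<delta> * D0"
  have rpos: "r > 0" using \<delta> D0pos by (simp add: r_def)
  have r\<rho>: "r < \<rho>" using assms(6) d0 by (simp add: r_def divide_inverse)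
  have \<rho>pos: "\<rho> > 0" using rpos r\<rho> by simp
  define M where "M = sqrt (\<rho> / r)"
  have M1: "M > 1" using rpos r\<rho> by (simp add: M_def)
  have rM: "r * M < \<rho>"
  proof -
    have M2: "M ^ 2 = \<rho> / r" using rpos \<rho>pos by (simp add: M_def)
    have "(r * M) ^ 2 = r ^ 2 * M ^ 2" by (simp add: power_mult_distrib)
    also have "\<dots> = r * \<rho>" using rpos unfolding M2 by (simp add: power2_eq_square)
    finally have "(r * M) ^ 2 = r * \<rho>" .
    also have "\<dots> < \<rho> ^ 2" using rpos r\<rho> \<rho>pos by (simp add: power2_eq_square)
    finally show ?thesis using \<rho>pos by (simp add: power_less_imp_less_base)
  qed
  have lim0: "((\<lambda>x::real. (2 * x) powr (-2/3)) \<longlongrightarrow> 0) at_top" by real_asymp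
  have "((\<lambda>x::real. c1 * (2 * x) powr (-2/3)) \<longlongrightarrow> c1 * 0) at_top"
    by (intro tendsto_mult tendsto_const lim0)
  then have "eventually (\<lambda>x::real. c1 * (2 * x) powr (-2/3) < ln M) at_top"
    using M1 by (intro order_tendstoD(2)) auto
  then obtain A0 where A0': "\<And>x::real. x \<ge> A0 \<Longrightarrow> c1 * (2 * x) powr (-2/3) < ln M"
    by (auto simp: eventually_at_top_linorder)
  have A0: "\<forall>x::real. x \<ge> A0 \<longrightarrow> c1 * (2 * x) powr (-2/3) \<le> ln M"
    using A0' less_imp_le by blast
  define C0 where "C0 = \<bar>A0\<bar> * exp c1"
  have C0: "C0 \<ge> 0" by (simp add: C0_def)
  define y where "y = (\<lambda>n::nat. D * exp 1 * (C0 + \<delta> * real n powr (5/4) * M + real n) / (real n powr (1/4) * real n))"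
  define F where "F = (\<lambda>n::nat. (D / real n powr (1/4)) * (\<delta> * real n powr (5/4)) * y n ^ n)"
  have LF: "LL s n m {0 .. \<delta> * real n powr (5/4)} \<le> F n" if "n \<ge> 1" "is_partition_mult n m" for n m
    unfolding F_def y_def C0_def
    by (rule main_bound[OF s c1 hyp that Dpos lt[OF that(1)] _ A0 \<delta>]) (use M1 in simp)
  define z where "z = (\<lambda>n::nat. D0 * (C0 * (1 / (real n powr (1/4) * real n))) + r * M + D0 * (1 / real n powr (1/4)))"
  have p54: "real n powr (5/4) = real n powr (1/4) * real n" if "n \<ge> 1" for n :: nat
  proof -
    have "real n powr (5/4) = real n powr (1/4 + 1)" by simp
    also have "\<dots> = real n powr (1/4) * real n powr 1" by (rule powr_add)
    finally show ?thesis using that by simp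
  qed
  have y0: "y n \<ge> 0" for n
    using Dpos C0 \<delta> M1 by (simp add: y_def)
  have yz: "y n \<le> z n" if n: "n \<ge> 1" for n :: nat
  proof -
    define Q where "Q = (C0 + \<delta> * real n powr (5/4) * M + real n) / (real n powr (1/4) * real n)"
    have Q0: "Q \<ge> 0" using C0 \<delta> M1 by (simp add: Q_def)
    have "y n = D * exp 1 * Q" by (simp add: y_def Q_def)
    also have "\<dots> \<le> D0 * Q" using DE Q0 by (rule mult_right_mono)
    also have "D0 * Q = z n"
    proof -
      have pp: "real n powr (1/4) * real n > 0" using n by simp
      have "Q = C0 / (real n powr (1/4) * real n) + \<delta> * M + 1 / real n powr (1/4)"
        using pp n unfolding Q_def p54[OF n] by (simp add: field_simps)
      then show ?thesis by (simp add: z_def r_def algebra_simps)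
    qed
    finally show ?thesis .
  qed
  have l1: "(\<lambda>n::nat. 1 / (real n powr (1/4) * real n)) \<longlonglongrightarrow> 0" by real_asymp
  have l2: "(\<lambda>n::nat. 1 / real n powr (1/4)) \<longlonglongrightarrow> 0" by real_asymp
  have "z \<longlonglongrightarrow> D0 * (C0 * 0) + r * M + D0 * 0"
    unfolding z_def
    by (intro tendsto_add tendsto_mult tendsto_const l1 l2)
  then have zlim: "z \<longlonglongrightarrow> r * M" by simp
  define \<rho>1 where "\<rho>1 = (r * M + \<rho>) / 2"
  have \<rho>1: "r * M < \<rho>1" "\<rho>1 < \<rho>" using rM by (simp_all add: \<rho>1_def mult.commute)
  have ev: "eventually (\<lambda>n. z n < \<rho>1) sequentially"
    using order_tendstoD(2)[OF zlim \<rho>1(1)] .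
  define G where "G = (\<lambda>n. F n / \<rho> ^ (n + 1))"
  define H where "H = (\<lambda>n::nat. (D * \<delta> / \<rho>) * (real n ^ 2 * (\<rho>1 / \<rho>) ^ n))"
  have \<rho>1pos: "\<rho>1 > 0" using rpos M1 \<rho>1(1) by (smt (verit) mult_pos_pos)
  have q0: "0 \<le> \<rho>1 / \<rho>" using \<rho>1pos \<rho>pos by simp
  have q1: "\<rho>1 / \<rho> < 1" using \<rho>1(2) \<rho>pos by simp
  have Hlim: "H \<longlonglongrightarrow> (D * \<delta> / \<rho>) * 0"
    unfolding H_def by (intro tendsto_mult tendsto_const n2_geom_lim q0 q1)
  have F0: "F n \<ge> 0" for n using Dpos \<delta> y0[of n] by (simp add: F_def)
  have evG0: "eventually (\<lambda>n. 0 \<le> G n) sequentially" using F0 \<rho>pos by (simp add: G_def)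
  have evGH: "eventually (\<lambda>n. G n \<le> H n) sequentially"
    using ev eventually_ge_at_top[of "1::nat"]
  proof eventually_elim
    case (elim n)
    have n: "n \<ge> 1" using elim by simp
    have pn: "real n powr (1/4) \<ge> 1" using n by (simp add: ge_one_powr_ge_zero)
    have a1: "D / real n powr (1/4) \<le> D" using pn Dpos by (simp add: divide_le_eq mult_le_cancel_left1)
    have "real n powr (5/4) \<le> real n powr 2" using n by (intro powr_mono) auto
    also have "\<dots> = real n ^ 2" by (rule powr_numeral) simp
    finally have a2: "\<delta> * real n powr (5/4) \<le> \<delta> * real n ^ 2" using \<delta> by simp
    have a3: "y n ^ n \<le> \<rho>1 ^ n" using y0[of n] yz[OF n] elim by (intro power_mono) auto
    have "F n \<le> D * (\<delta> * real n ^ 2) * \<rho>1 ^ n"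
      unfolding F_def using a1 a2 a3 Dpos \<delta> y0[of n]
      by (intro mult_mono) auto
    then have "G n \<le> D * (\<delta> * real n ^ 2) * \<rho>1 ^ n / \<rho> ^ (n + 1)"
      using \<rho>pos by (simp add: G_def divide_right_mono)
    also have "\<dots> = H n" using \<rho>pos by (simp add: H_def power_divide field_simps)
    finally show ?case .
  qed
  have "G \<longlonglongrightarrow> 0"
    using Hlim by (intro real_tendsto_sandwich[OF evG0 evGH tendsto_const]) simp
  then have "Bseq G" by (intro convergent_imp_Bseq convergentI)
  then obtain K where K: "K > 0" "\<And>n. norm (G n) \<le> K" by (metis BseqE)
  show ?thesis
  proof (intro exI[of _ K] conjI allI impI)
    show "K > 0" by (rule K(1))
    fix n :: nat and m assume n: "n \<ge> 1" and pm: "is_partition_mult n m"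
    have "LL s n m {0 .. \<delta> * real n powr (5/4)} \<le> F n" by (rule LF[OF n pm])
    also have "F n = G n * \<rho> ^ (n + 1)" using \<rho>pos by (simp add: G_def)
    also have "\<dots> \<le> K * \<rho> ^ (n + 1)"
      using K(2)[of n] \<rho>pos by (intro mult_right_mono) auto
    finally show "LL s n m {0 .. \<delta> * real n powr (5/4)} \<le> K * \<rho> ^ (n + 1)" .
  qed
qed

end
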